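(* Let $G=(V,E)$ be a finite simple undirected graph and $K$ a nonnegative integer. Construct an edge-labeled graph $G'$ with three categories red, blue, green as follows: its nodes are $V$ together with, for each edge $\{u,v\}\in E$ (with an arbitrary choice of which endpoint is called $u$), four new auxiliary nodes $a,b,c,d$ specific to that edge; for each edge $\{u,v\}\in E$ add the six labeled edges $\{u,c\}$ blue, $\{c,d\}$ green, $\{d,v\}$ red, $\{v,b\}$ blue, $\{b,a\}$ green, $\{a,u\}$ red. Then there exists a partition of $V$ into two sets with at least $K$ edges of $G$ crossing the partition if and only if there exists an assignment $Y$ of the nodes of $G'$ to the three colors with $\mathrm{CatEdgeClus}(Y)\le 4|E|-K$.
   Context: For an edge-labeled graph with node set $V'$, edge collection $E'$, categories $C$ and labeling $\ell:E'\to C$, and a node coloring $Y:V'\to C$, an edge $e$ is a mistake ($m_Y(e)=1$) if some endpoint $i\in e$ has $Y[i]\neq\ell(e)$, and $m_Y(e)=0$ otherwise; $\mathrm{CatEdgeClus}(Y)=\sum_{e\in E'}m_Y(e)$ is the number of mistakes. *)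

theory Defs
  imports Main
begin

datatype color = Red | Blue | Green

datatype aux = AuxA | AuxB | AuxC | AuxD

datatype 'a node = Orig 'a | Aux "'a set" aux

definition mistake :: "('v \<Rightarrow> 'c) \<Rightarrow> ('v set \<times> 'c) \<Rightarrow> nat" where
  "mistake Y el = (if \<exists>i\<in>fst el. Y i \<noteq> snd el then 1 else 0)"

definition CatEdgeClus :: "('v set \<times> 'c) set \<Rightarrow> ('v \<Rightarrow> 'c) \<Rightarrow> nat" where
  "CatEdgeClus E' Y = (\<Sum>el\<in>E'. mistake Y el)"

definition gadget :: "('a set \<Rightarrow> 'a \<times> 'a) \<Rightarrow> 'a set \<Rightarrow> ('a node set \<times> color) set" where
  "gadget orient e =
    (let u = fst (orient e); v = snd (orient e) in
     {({Orig u, Aux e AuxC}, Blue),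
      ({Aux e AuxC, Aux e AuxD}, Green),
      ({Aux e AuxD, Orig v}, Red),
      ({Orig v, Aux e AuxB}, Blue),
      ({Aux e AuxB, Aux e AuxA}, Green),
      ({Aux e AuxA, Orig u}, Red)})"

definition reduction_edges :: "'a set set \<Rightarrow> ('a set \<Rightarrow> 'a \<times> 'a) \<Rightarrow> ('a node set \<times> color) set" where
  "reduction_edges E orient = (\<Union>e\<in>E. gadget orient e)"

definition reduction_nodes :: "'a set \<Rightarrow> 'a set set \<Rightarrow> 'a node set" where
  "reduction_nodes V E = Orig ` V \<union> {Aux e x | e x. e \<in> E}"

definition cut_edges :: "'a set set \<Rightarrow> 'a set \<Rightarrow> 'a set set" where
  "cut_edges E S = {e \<in> E. \<exists>x\<in>e. \<exists>y\<in>e. x \<in> S \<and> y \<notin> S}"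

end

theory Submission
  imports Defs
begin

definition mm :: "('v \<Rightarrow> color) \<Rightarrow> 'v \<Rightarrow> 'v \<Rightarrow> color \<Rightarrow> nat" where
  "mm Y x y c = (if Y x = c \<and> Y y = c then 0 else 1)"

lemma mistake2: "mistake Y ({x,y},c) = mm Y x y c"
  unfolding mistake_def mm_def by auto

definition gc :: "('a node \<Rightarrow> color) \<Rightarrow> 'a \<Rightarrow> 'a \<Rightarrow> 'a set \<Rightarrow> nat" where
  "gc Y u v e = mm Y (Orig u) (Aux e AuxC) Blue + mm Y (Aux e AuxC) (Aux e AuxD) Green
     + mm Y (Aux e AuxD) (Orig v) Red + mm Y (Orig v) (Aux e AuxB) Blue
     + mm Y (Aux e AuxB) (Aux e AuxA) Green + mm Y (Aux e AuxA) (Orig u) Red"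

lemma gadget_sum:
  assumes "fst (orient e) \<noteq> snd (orient e)"
  shows "(\<Sum>el\<in>gadget orient e. mistake Y el) = gc Y (fst (orient e)) (snd (orient e)) e"
  using assms unfolding gadget_def Let_def gc_def
  by (simp add: doubleton_eq_iff mistake2)

lemma gc_lower:
  "gc Y u v e \<ge> (if (Y (Orig u) = Blue \<and> Y (Orig v) = Red) \<or> (Y (Orig u) = Red \<and> Y (Orig v) = Blue) then 3 else 4)"
  unfolding gc_def mm_def
  by (cases "Y (Orig u)"; cases "Y (Orig v)"; cases "Y (Aux e AuxA)"; cases "Y (Aux e AuxB)";
      cases "Y (Aux e AuxC)"; cases "Y (Aux e AuxD)"; simp)

lemma gadget_aux:
  assumes "el \<in> gadget orient e"
  shows "(\<exists>x. Aux e x \<in> fst el) \<and> (\<forall>e' x. Aux e' x \<in> fst el \<longrightarrow> e' = e)"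
  using assms unfolding gadget_def Let_def by fastforce

lemma total_eq:
  assumes fin: "finite E" and ne: "\<forall>e\<in>E. fst (orient e) \<noteq> snd (orient e)"
  shows "CatEdgeClus (reduction_edges E orient) Y = (\<Sum>e\<in>E. gc Y (fst (orient e)) (snd (orient e)) e)"
proof -
  have "CatEdgeClus (reduction_edges E orient) Y = (\<Sum>e\<in>E. \<Sum>el\<in>gadget orient e. mistake Y el)"
    unfolding CatEdgeClus_def reduction_edges_def
  proof (rule sum.UNION_disjoint)
    show "finite E" by fact
    show "\<forall>e\<in>E. finite (gadget orient e)" by (simp add: gadget_def Let_def)
    show "\<forall>e\<in>E. \<forall>e'\<in>E. e \<noteq> e' \<longrightarrow> gadget orient e \<inter> gadget orient e' = {}"
    proof (intro ballI impI)
      fix e e' assume "e \<in> E" "e' \<in> E" "e \<noteq> e'"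
      show "gadget orient e \<inter> gadget orient e' = {}"
      proof (rule ccontr)
        assume "gadget orient e \<inter> gadget orient e' \<noteq> {}"
        then obtain el where "el \<in> gadget orient e" "el \<in> gadget orient e'" by blast
        with gadget_aux[of el orient e] gadget_aux[of el orient e'] \<open>e \<noteq> e'\<close> show False by metis
      qed
    qed
  qed
  also have "\<dots> = (\<Sum>e\<in>E. gc Y (fst (orient e)) (snd (orient e)) e)"
    using ne by (intro sum.cong) (auto simp: gadget_sum)
  finally show ?thesis .
qed

theorem mainTheorem4:
  fixes V :: "'a set" and E :: "'a set set" and K :: nat
    and orient :: "'a set \<Rightarrow> 'a \<times> 'a"
  assumes "finite V"
    and "\<forall>e\<in>E. \<exists>u v. e = {u, v} \<and> u \<noteq> v \<and> u \<in> V \<and> v \<in> V"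
    and "\<forall>e\<in>E. {fst (orient e), snd (orient e)} = e"
  shows "(\<exists>S. S \<subseteq> V \<and> K \<le> card (cut_edges E S)) \<longleftrightarrow>
         (\<exists>Y :: 'a node \<Rightarrow> color.
            int (CatEdgeClus (reduction_edges E orient) Y) \<le> 4 * int (card E) - int K)"
proof -
  have EP: "E \<subseteq> Pow V"
  proof
    fix e assume "e \<in> E"
    then obtain u v where "e = {u,v}" "u \<in> V" "v \<in> V" using assms(2) by meson
    then show "e \<in> Pow V" by simp
  qed
  have fin: "finite E" using finite_subset[OF EP] assms(1) by blast
  have ne: "\<forall>e\<in>E. fst (orient e) \<noteq> snd (orient e)"
  proof
    fix e assume "e \<in> E"
    then obtain u v where "e = {u,v}" "u \<noteq> v" using assms(2) by meson
    moreover have "{fst (orient e), snd (orient e)} = e" using assms(3) \<open>e \<in> E\<close> by simp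
    ultimately show "fst (orient e) \<noteq> snd (orient e)" by (metis doubleton_eq_iff)
  qed
  have inV: "\<forall>e\<in>E. fst (orient e) \<in> V \<and> snd (orient e) \<in> V"
    using assms(3) EP by blast
  have cut: "cut_edges E S = {e\<in>E. (fst (orient e) \<in> S) \<noteq> (snd (orient e) \<in> S)}" for S
    unfolding cut_edges_def using assms(3) by (metis (no_types, lifting) insert_iff singleton_iff)
  let ?ind = "\<lambda>S e. if (fst (orient e) \<in> S) \<noteq> (snd (orient e) \<in> S) then 1 else (0::int)"
  have cardcut: "int (card (cut_edges E S)) = (\<Sum>e\<in>E. ?ind S e)" for S
    unfolding cut using fin by (simp add: sum.If_cases Int_def)
  show ?thesis
  proof
    assume "\<exists>S. S \<subseteq> V \<and> K \<le> card (cut_edges E S)"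
    then obtain S where S: "K \<le> card (cut_edges E S)" by blast
    define Y0 where "Y0 = (\<lambda>x. if x \<in> S then Blue else Red)"
    define Y where "Y = (\<lambda>n. case n of Orig x \<Rightarrow> Y0 x
       | Aux e t \<Rightarrow> (let u = fst (orient e); v = snd (orient e) in
           case t of
             AuxC \<Rightarrow> (if Y0 u = Blue \<and> Y0 v = Red then Blue else Green)
           | AuxD \<Rightarrow> (if Y0 u = Blue \<and> Y0 v = Red then Red else Green)
           | AuxB \<Rightarrow> (if Y0 u = Red \<and> Y0 v = Blue then Blue else Green)
           | AuxA \<Rightarrow> (if Y0 u = Red \<and> Y0 v = Blue then Red else Green)))"
    have g: "int (gc Y (fst (orient e)) (snd (orient e)) e) = 4 - ?ind S e" for e
    proof -
      have YO: "Y (Orig x) = Y0 x" for x unfolding Y_def by simp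
      define u where "u = fst (orient e)"
      define v where "v = snd (orient e)"
      have YC: "Y (Aux e AuxC) = (if Y0 u = Blue \<and> Y0 v = Red then Blue else Green)"
        unfolding Y_def u_def v_def Let_def by simp
      have YD: "Y (Aux e AuxD) = (if Y0 u = Blue \<and> Y0 v = Red then Red else Green)"
        unfolding Y_def u_def v_def Let_def by simp
      have YB: "Y (Aux e AuxB) = (if Y0 u = Red \<and> Y0 v = Blue then Blue else Green)"
        unfolding Y_def u_def v_def Let_def by simp
      have YA: "Y (Aux e AuxA) = (if Y0 u = Red \<and> Y0 v = Blue then Red else Green)"
        unfolding Y_def u_def v_def Let_def by simp
      show ?thesis
        unfolding u_def[symmetric] v_def[symmetric] gc_def mm_def YO YA YB YC YD
        by (cases "u \<in> S"; cases "v \<in> S"; simp add: Y0_def)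
    qed
    have "int (CatEdgeClus (reduction_edges E orient) Y) = (\<Sum>e\<in>E. 4 - ?ind S e)"
      using total_eq[OF fin ne, of Y] g by simp
    also have "\<dots> = 4 * int (card E) - int (card (cut_edges E S))"
      by (simp add: sum_subtractf cardcut)
    finally have eq: "int (CatEdgeClus (reduction_edges E orient) Y) = 4 * int (card E) - int (card (cut_edges E S))" .
    show "\<exists>Y :: 'a node \<Rightarrow> color.
            int (CatEdgeClus (reduction_edges E orient) Y) \<le> 4 * int (card E) - int K"
      using eq S by (intro exI[of _ Y]) linarith
  next
    assume "\<exists>Y :: 'a node \<Rightarrow> color.
            int (CatEdgeClus (reduction_edges E orient) Y) \<le> 4 * int (card E) - int K"
    then obtain Y :: "'a node \<Rightarrow> color" where Y:
      "int (CatEdgeClus (reduction_edges E orient) Y) \<le> 4 * int (card E) - int K" by blast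
    define S where "S = {x\<in>V. Y (Orig x) = Blue}"
    have g: "4 - ?ind S e \<le> int (gc Y (fst (orient e)) (snd (orient e)) e)" if "e \<in> E" for e
    proof -
      have "fst (orient e) \<in> V" "snd (orient e) \<in> V" using inV that by auto
      moreover note gc_lower[of Y "fst (orient e)" "snd (orient e)" e]
      ultimately show ?thesis unfolding S_def
        by (cases "Y (Orig (fst (orient e)))"; cases "Y (Orig (snd (orient e)))"; simp)
    qed
    have "4 * int (card E) - int (card (cut_edges E S)) = (\<Sum>e\<in>E. 4 - ?ind S e)"
      by (simp add: sum_subtractf cardcut)
    also have "\<dots> \<le> (\<Sum>e\<in>E. int (gc Y (fst (orient e)) (snd (orient e)) e))"
      using g by (intro sum_mono) auto
    also have "\<dots> = int (CatEdgeClus (reduction_edges E orient) Y)"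
      using total_eq[OF fin ne, of Y] by simp
    finally have "K \<le> card (cut_edges E S)" using Y by linarith
    then show "\<exists>S. S \<subseteq> V \<and> K \<le> card (cut_edges E S)" by (intro exI[of _ S]) (auto simp: S_def)
  qed
qed

end
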